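(* Let $H$ be a fixed graph, $\eta>0$ fixed, and $p=p(n)$. Suppose $n^{v(J)}p^{e(J)}=\omega(1)$ for every induced subgraph $J\subseteq H$ with at least one edge. Let $\mathcal C\subseteq\binom{[n]}{v(H)}$ be a family (depending on $n$, fixed independently of the random graph) with $|\mathcal C|\ge\eta\binom{n}{v(H)}$. Then asymptotically almost surely $\mathbb{G}(n,p)$ contains a copy of $H$ whose vertex set belongs to $\mathcal C$.
   Context: $\mathbb{G}(n,p)$ is the binomial random graph on vertex set $[n]$. *)

theory Defs
  imports "HOL-Probability.Probability"
begin

definition pairs :: "nat \<Rightarrow> nat set set" where
  "pairs n = {e. e \<subseteq> {1..n} \<and> card e = 2}"

text \<open>The binomial random graph G(n,p): each potential edge present independently
  with probability p. A graph is represented by its edge indicator on 2-subsets of [n]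
  (value False outside the potential edges).\<close>
definition Gnp :: "nat \<Rightarrow> real \<Rightarrow> (nat set \<Rightarrow> bool) pmf" where
  "Gnp n p = Pi_pmf (pairs n) False (\<lambda>_. bernoulli_pmf p)"

definition is_graph :: "nat \<Rightarrow> nat set set \<Rightarrow> bool" where
  "is_graph k EH \<longleftrightarrow> (\<forall>e\<in>EH. e \<subseteq> {0..<k} \<and> card e = 2)"

definition induced_edges :: "nat set set \<Rightarrow> nat set \<Rightarrow> nat set set" where
  "induced_edges EH S = {e\<in>EH. e \<subseteq> S}"

definition copy_on :: "nat \<Rightarrow> nat \<Rightarrow> nat set set \<Rightarrow> (nat set \<Rightarrow> bool) \<Rightarrow> nat set \<Rightarrow> bool" where
  "copy_on n k EH G A \<longleftrightarrow> (\<exists>\<phi>. inj_on \<phi> {0..<k} \<and> \<phi> ` {0..<k} \<subseteq> {1..n} \<and>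
      \<phi> ` {0..<k} = A \<and> (\<forall>e\<in>EH. G (\<phi> ` e)))"

end

theory Submission
  imports Defs
begin

lemma prob_edges:
  assumes F: "F \<subseteq> pairs n" and q: "0 \<le> q" "q \<le> 1"
  shows "measure_pmf.prob (Gnp n q) {G. \<forall>f\<in>F. G f} = q ^ card F"
proof -
  have finP: "finite (pairs n)"
    by (rule finite_subset[of _ "Pow {1..n}"]) (auto simp: pairs_def)
  define B where "B = (\<lambda>x. if x \<in> F then {True} else (UNIV::bool set))"
  have eq: "{G. \<forall>f\<in>F. G f} = Pi (pairs n) B"
    using F unfolding B_def Pi_def by auto
  have "measure_pmf.prob (Gnp n q) {G. \<forall>f\<in>F. G f} = (\<Prod>x\<in>pairs n. measure_pmf.prob (bernoulli_pmf q) (B x))"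
    unfolding eq Gnp_def by (rule measure_Pi_pmf_Pi[OF finP])
  also have "\<dots> = (\<Prod>x\<in>pairs n. if x \<in> F then q else 1)"
    by (intro prod.cong refl) (simp add: B_def q measure_pmf_single)
  also have "\<dots> = q ^ card F"
    using F finP by (simp add: prod.If_cases Int_absorb1)
  finally show ?thesis .
qed

lemma count_sup:
  assumes T: "T \<subseteq> {1..n}" "card T = s"
  shows "card {B. B \<subseteq> {1..n} \<and> card B = k \<and> T \<subseteq> B} \<le> n ^ (k - s)"
proof -
  let ?X = "{B. B \<subseteq> {1..n} \<and> card B = k \<and> T \<subseteq> B}"
  have finT: "finite T" using T finite_subset by blast
  have inj: "inj_on (\<lambda>B. B - T) ?X" by (auto simp: inj_on_def)
  have sub: "(\<lambda>B. B - T) ` ?X \<subseteq> {D. D \<subseteq> {1..n} \<and> card D = k - s}"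
  proof
    fix D assume "D \<in> (\<lambda>B. B - T) ` ?X"
    then obtain B where B: "B \<in> ?X" "D = B - T" by blast
    then have "card D = card B - card T" using finT by (simp add: card_Diff_subset)
    then show "D \<in> {D. D \<subseteq> {1..n} \<and> card D = k - s}" using B T by auto
  qed
  have "card ?X = card ((\<lambda>B. B - T) ` ?X)" using inj by (simp add: card_image)
  also have "\<dots> \<le> card {D. D \<subseteq> {1..n} \<and> card D = k - s}"
    by (rule card_mono[OF _ sub], rule finite_subset[of _ "Pow {1..n}"]) auto
  also have "\<dots> = n choose (k - s)" by (simp add: n_subsets)
  also have "\<dots> \<le> n ^ (k - s)"
    by (cases "k - s \<le> n") (auto simp: binomial_le_pow binomial_eq_0)
  finally show ?thesis .
qed

lemma int_ind_pmf[simp]: "integrable (measure_pmf M) (indicat_real A)"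
  by (simp add: integrable_indicator_iff less_top[symmetric])

lemma sm:
  fixes M :: "'a pmf" and C :: "'b set" and E :: "'b \<Rightarrow> 'a set"
  assumes fin: "finite C"
  shows "measure_pmf.prob M {x. \<forall>A\<in>C. x \<notin> E A} * (\<Sum>A\<in>C. measure_pmf.prob M (E A))^2
     \<le> (\<Sum>A\<in>C. \<Sum>B\<in>C. measure_pmf.prob M (E A \<inter> E B)) - (\<Sum>A\<in>C. measure_pmf.prob M (E A))^2"
proof -
  define \<mu> where "\<mu> = (\<Sum>A\<in>C. measure_pmf.prob M (E A))"
  define X where "X = (\<lambda>x. \<Sum>A\<in>C. indicator (E A) x :: real)"
  define Z where "Z = {x. \<forall>A\<in>C. x \<notin> E A}"
  have intX: "integrable M X" unfolding X_def by (rule Bochner_Integration.integrable_sum) simp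
  have EX: "measure_pmf.expectation M X = \<mu>"
    unfolding X_def \<mu>_def by (subst Bochner_Integration.integral_sum) auto
  have X2: "(X x)^2 = (\<Sum>A\<in>C. \<Sum>B\<in>C. indicator (E A \<inter> E B) x)" for x
    unfolding X_def power2_eq_square sum_product by (simp add: indicator_inter_arith)
  have intX2: "integrable M (\<lambda>x. (X x)^2)" unfolding X2
    by (rule Bochner_Integration.integrable_sum)+ simp
  have EX2: "measure_pmf.expectation M (\<lambda>x. (X x)^2) = (\<Sum>A\<in>C. \<Sum>B\<in>C. measure_pmf.prob M (E A \<inter> E B))"
    unfolding X2 by (subst Bochner_Integration.integral_sum, simp)+ simp
  have pw: "indicator Z x * \<mu>^2 \<le> (X x - \<mu>)^2" for x
  proof (cases "x \<in> Z")
    case True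
    then have "X x = 0" unfolding X_def Z_def by (auto intro!: sum.neutral)
    then show ?thesis using True by simp
  qed simp
  have "measure_pmf.expectation M (\<lambda>x. indicator Z x * \<mu>^2) \<le> measure_pmf.expectation M (\<lambda>x. (X x - \<mu>)^2)"
  proof (rule integral_mono)
    show "integrable (measure_pmf M) (\<lambda>x. (X x - \<mu>)\<^sup>2)"
      unfolding power2_diff by (intro Bochner_Integration.integrable_diff Bochner_Integration.integrable_add intX2) (auto intro: intX)
  qed (use pw in auto)
  also have "\<dots> = measure_pmf.expectation M (\<lambda>x. (X x)^2) - \<mu>^2"
    using measure_pmf.variance_eq[OF intX intX2] EX by simp
  finally show ?thesis unfolding EX2 Z_def[symmetric] \<mu>_def[symmetric] by simp
qed

lemma bound_n:
  fixes n k :: nat and EH :: "nat set set" and q :: real and C :: "nat set set"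
  assumes H: "is_graph k EH" and q: "0 \<le> q" "q \<le> 1"
    and Csub: "C \<subseteq> {A. A \<subseteq> {1..n} \<and> card A = k}"
  shows "measure_pmf.prob (Gnp n q) {G. \<not>(\<exists>A\<in>C. copy_on n k EH G A)} * (real (card C) * q ^ card EH)^2
     \<le> real (card C) * (\<Sum>S\<in>{S. S \<subseteq> {0..<k} \<and> induced_edges EH S \<noteq> {}}.
            q ^ (2 * card EH - card (induced_edges EH S)) * real n ^ (k - card S))"
proof -
  define m where "m = card EH"
  define Ss where "Ss = {S. S \<subseteq> {0..<k} \<and> induced_edges EH S \<noteq> {}}"
  define g where "g = (\<lambda>S. q ^ (2 * m - card (induced_edges EH S)))"
  have finC: "finite C" by (rule finite_subset[of _ "Pow {1..n}"]) (use Csub in auto)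
  have finEH: "finite EH" by (rule finite_subset[of _ "Pow {0..<k}"]) (use H in \<open>auto simp: is_graph_def\<close>)
  have finSs: "finite Ss" by (rule finite_subset[of _ "Pow {0..<k}"]) (auto simp: Ss_def)
  have EHk: "e \<subseteq> {0..<k}" "card e = 2" if "e \<in> EH" for e using H that by (auto simp: is_graph_def)
  have "\<forall>A\<in>C. \<exists>h. bij_betw h {0..<k} A"
  proof
    fix A assume "A \<in> C"
    then have "finite A" "card A = k" using Csub finite_subset[of A "{1..n}"] by auto
    then show "\<exists>h. bij_betw h {0..<k} A" by (intro finite_same_card_bij) auto
  qed
  then obtain \<phi> where \<phi>: "\<And>A. A \<in> C \<Longrightarrow> bij_betw (\<phi> A) {0..<k} A" by metis
  have injA: "inj_on (\<phi> A) {0..<k}" and imA: "\<phi> A ` {0..<k} = A" if "A \<in> C" for A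
    using \<phi>[OF that] by (auto simp: bij_betw_def)
  define F where "F = (\<lambda>A. (\<lambda>e. \<phi> A ` e) ` EH)"
  define E where "E = (\<lambda>A. {G. \<forall>f\<in>F A. G f})"
  define T where "T = (\<lambda>A B. {i\<in>{0..<k}. \<phi> A i \<in> B})"
  have finF: "finite (F A)" for A unfolding F_def using finEH by simp
  have FP: "F A \<subseteq> pairs n" if A: "A \<in> C" for A
  proof
    fix f assume "f \<in> F A"
    then obtain e where e: "e \<in> EH" "f = \<phi> A ` e" unfolding F_def by blast
    have "card f = card e" using e EHk[OF e(1)] injA[OF A] by (simp add: card_image inj_on_subset)
    moreover have "f \<subseteq> A" using e EHk[OF e(1)] imA[OF A] by auto
    moreover have "A \<subseteq> {1..n}" using Csub A by auto
    ultimately have "f \<subseteq> {1..n}" "card f = 2" using EHk[OF e(1)] by auto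
    then show "f \<in> pairs n" by (simp add: pairs_def)
  qed
  have cardF: "card (F A) = m" if A: "A \<in> C" for A
    unfolding F_def m_def
  proof (rule card_image, rule inj_onI)
    fix x y assume "x \<in> EH" "y \<in> EH" "\<phi> A ` x = \<phi> A ` y"
    then show "x = y" using inj_on_image_eq_iff[OF injA[OF A] EHk(1) EHk(1)] by blast
  qed
  have Ecopy: "E A \<subseteq> {G. copy_on n k EH G A}" if A: "A \<in> C" for A
  proof
    fix G assume "G \<in> E A"
    then have "\<forall>e\<in>EH. G (\<phi> A ` e)" unfolding E_def F_def by auto
    moreover have "\<phi> A ` {0..<k} \<subseteq> {1..n}" using imA[OF A] Csub A by auto
    ultimately show "G \<in> {G. copy_on n k EH G A}" unfolding copy_on_def using injA[OF A] imA[OF A] by blast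
  qed
  have probE: "measure_pmf.prob (Gnp n q) (E A) = q ^ m" if "A \<in> C" for A
    unfolding E_def using prob_edges[OF FP[OF that] q] cardF[OF that] by simp
  have probEE: "measure_pmf.prob (Gnp n q) (E A \<inter> E B) = q ^ card (F A \<union> F B)"
    if "A \<in> C" "B \<in> C" for A B
  proof -
    have "E A \<inter> E B = {G. \<forall>f\<in>F A \<union> F B. G f}" unfolding E_def by auto
    then show ?thesis using prob_edges[of "F A \<union> F B" n q] FP that q by simp
  qed
  have gnn: "g S \<ge> 0" for S unfolding g_def using q by simp
  have pair: "q ^ card (F A \<union> F B) - q ^ (2*m) \<le> (\<Sum>S\<in>Ss. if S = T A B then g S else 0)"
    if A: "A \<in> C" and B: "B \<in> C" for A B
  proof (cases "F A \<inter> F B = {}")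
    case True
    then have "card (F A \<union> F B) = 2 * m" using card_Un_disjoint[OF finF finF True] cardF A B by simp
    then show ?thesis using gnn by (simp add: sum_nonneg)
  next
    case False
    let ?I = "induced_edges EH (T A B)"
    have sub: "F A \<inter> F B \<subseteq> (\<lambda>e. \<phi> A ` e) ` ?I"
    proof
      fix f assume f: "f \<in> F A \<inter> F B"
      then obtain e where e: "e \<in> EH" "f = \<phi> A ` e" unfolding F_def by blast
      from f obtain e' where e': "e' \<in> EH" "f = \<phi> B ` e'" unfolding F_def by blast
      have "f \<subseteq> B" using e' EHk[OF e'(1)] imA[OF B] by auto
      then have "e \<subseteq> T A B" using e EHk[OF e(1)] unfolding T_def by auto
      then show "f \<in> (\<lambda>e. \<phi> A ` e) ` ?I" using e unfolding induced_edges_def by auto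
    qed
    have finI: "finite ?I" using finEH unfolding induced_edges_def by simp
    have Ine: "?I \<noteq> {}" using sub False by auto
    have TSs: "T A B \<in> Ss" unfolding Ss_def T_def using Ine by (auto simp: T_def)
    have c1: "card (F A \<inter> F B) \<le> card ?I"
      using card_mono[OF finite_imageI[OF finI] sub] card_image_le[OF finI, of "\<lambda>e. \<phi> A ` e"] by linarith
    have c2: "card ?I \<le> m" unfolding m_def induced_edges_def by (rule card_mono[OF finEH]) auto
    have cU: "card (F A \<union> F B) = 2 * m - card (F A \<inter> F B)"
      using card_Un_Int[OF finF finF, of A B] cardF A B by simp
    have "q ^ card (F A \<union> F B) \<le> g (T A B)"
      unfolding g_def cU by (rule power_decreasing) (use c1 c2 q in auto)
    moreover have "(\<Sum>S\<in>Ss. if S = T A B then g S else 0) = g (T A B)"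
      using TSs finSs by (simp add: sum.delta)
    moreover have "q ^ (2 * m) \<ge> 0" using q by simp
    ultimately show ?thesis by linarith
  qed
  have count: "real (card {B\<in>C. T A B = S}) \<le> real n ^ (k - card S)" if A: "A \<in> C" and S: "S \<in> Ss" for A S
  proof -
    have Sk: "S \<subseteq> {0..<k}" using S by (simp add: Ss_def)
    have "{B\<in>C. T A B = S} \<subseteq> {B. B \<subseteq> {1..n} \<and> card B = k \<and> \<phi> A ` S \<subseteq> B}"
      using Csub Sk unfolding T_def by auto
    then have "card {B\<in>C. T A B = S} \<le> card {B. B \<subseteq> {1..n} \<and> card B = k \<and> \<phi> A ` S \<subseteq> B}"
      by (intro card_mono) (auto intro: finite_subset[of _ "Pow {1..n}"])
    also have "\<dots> \<le> n ^ (k - card S)"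
    proof (rule count_sup)
      have "A \<subseteq> {1..n}" using Csub A by blast
      then show "\<phi> A ` S \<subseteq> {1..n}" using image_mono[OF Sk, of "\<phi> A"] imA[OF A] by blast
      show "card (\<phi> A ` S) = card S" using injA[OF A] Sk by (simp add: card_image inj_on_subset)
    qed
    finally show ?thesis by (metis of_nat_le_iff of_nat_power)
  qed
  define P' where "P' = measure_pmf.prob (Gnp n q) {G. \<forall>A\<in>C. G \<notin> E A}"
  have PP': "measure_pmf.prob (Gnp n q) {G. \<not>(\<exists>A\<in>C. copy_on n k EH G A)} \<le> P'"
    unfolding P'_def by (rule measure_pmf.finite_measure_mono) (use Ecopy in auto)
  have mu: "(\<Sum>A\<in>C. measure_pmf.prob (Gnp n q) (E A)) = real (card C) * q ^ m"
    using probE by simp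
  have "P' * (real (card C) * q ^ m)^2 \<le>
      (\<Sum>A\<in>C. \<Sum>B\<in>C. measure_pmf.prob (Gnp n q) (E A \<inter> E B)) - (real (card C) * q ^ m)^2"
    using sm[OF finC, of "Gnp n q" E] unfolding mu P'_def by simp
  also have "\<dots> = (\<Sum>A\<in>C. \<Sum>B\<in>C. q ^ card (F A \<union> F B) - q ^ (2*m))"
  proof -
    have "(real (card C) * q ^ m)^2 = (\<Sum>A\<in>C. \<Sum>B\<in>C. q ^ (2*m))"
      by (simp add: power_mult_distrib power_mult[symmetric] mult.commute power2_eq_square power_add[symmetric] mult_2_right)
    then show ?thesis by (simp add: probEE sum_subtractf)
  qed
  also have "\<dots> \<le> (\<Sum>A\<in>C. \<Sum>B\<in>C. \<Sum>S\<in>Ss. if S = T A B then g S else 0)"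
    by (intro sum_mono pair) auto
  also have "\<dots> = (\<Sum>A\<in>C. \<Sum>S\<in>Ss. g S * real (card {B\<in>C. T A B = S}))"
  proof (rule sum.cong[OF refl])
    fix A assume "A \<in> C"
    have "(\<Sum>B\<in>C. \<Sum>S\<in>Ss. if S = T A B then g S else 0) = (\<Sum>S\<in>Ss. \<Sum>B\<in>C. if T A B = S then g S else 0)"
      by (subst sum.swap) (auto intro!: sum.cong)
    also have "\<dots> = (\<Sum>S\<in>Ss. g S * real (card {B\<in>C. T A B = S}))"
      by (intro sum.cong refl) (simp add: sum.inter_filter[OF finC, symmetric])
    finally show "(\<Sum>B\<in>C. \<Sum>S\<in>Ss. if S = T A B then g S else 0) = (\<Sum>S\<in>Ss. g S * real (card {B\<in>C. T A B = S}))" .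
  qed
  also have "\<dots> \<le> (\<Sum>A\<in>C. \<Sum>S\<in>Ss. g S * real n ^ (k - card S))"
    by (intro sum_mono mult_left_mono count gnn)
  also have "\<dots> = real (card C) * (\<Sum>S\<in>Ss. g S * real n ^ (k - card S))" by simp
  finally have "P' * (real (card C) * q ^ m)^2 \<le> real (card C) * (\<Sum>S\<in>Ss. g S * real n ^ (k - card S))" .
  moreover have "measure_pmf.prob (Gnp n q) {G. \<not>(\<exists>A\<in>C. copy_on n k EH G A)} * (real (card C) * q ^ m)^2
      \<le> P' * (real (card C) * q ^ m)^2" by (rule mult_right_mono[OF PP']) simp
  ultimately show ?thesis unfolding g_def m_def Ss_def by linarith
qed


lemma term_bound:
  fixes q c eta :: real and n k s e m :: nat
  assumes q: "q > 0" and n: "n \<ge> 1" and k: "k \<ge> 1" "s \<le> k" and em: "e \<le> m" and eta: "eta > 0"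
    and c: "c \<ge> eta * (real n / real k) ^ k"
  shows "q ^ (2*m - e) * real n ^ (k - s) / (c * q ^ (2*m)) \<le> (real k ^ k / eta) * inverse (real n ^ s * q ^ e)"
proof -
  have npos: "real n > 0" using n by simp
  have "(real n / real k) ^ k > 0" using npos k by simp
  then have cpos: "c > 0" using c mult_pos_pos[OF eta] by (meson less_le_trans)
  have e1: "q ^ (2*m) = q ^ (2*m - e) * q ^ e" using em by (simp add: power_add[symmetric])
  have e2: "real n ^ k = real n ^ (k - s) * real n ^ s" using k by (simp add: power_add[symmetric])
  have gen: "a * b / (c * (a * x)) = (b * y / c) * inverse (y * x)" if "a > 0" "x > 0" "y > 0" for a b x y :: real
    using that cpos by (simp add: field_simps)
  have "q ^ (2*m - e) * real n ^ (k - s) / (c * q ^ (2*m)) = (real n ^ k / c) * inverse (real n ^ s * q ^ e)"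
    unfolding e1 e2 by (rule gen) (use q npos in simp_all)
  also have "\<dots> \<le> (real k ^ k / eta) * inverse (real n ^ s * q ^ e)"
  proof (rule mult_right_mono)
    have "c \<ge> eta * (real n ^ k / real k ^ k)" using c by (simp add: power_divide)
    then have "real n ^ k \<le> c * real k ^ k / eta" using eta k by (simp add: field_simps)
    then show "real n ^ k / c \<le> real k ^ k / eta" using cpos eta by (simp add: field_simps)
  qed (use q npos in simp)
  finally show ?thesis .
qed

theorem corollaryA2:
  fixes k :: nat and EH :: "nat set set" and \<eta> :: real
    and p :: "nat \<Rightarrow> real" and C :: "nat \<Rightarrow> nat set set"
  assumes H: "is_graph k EH"
    and eta: "\<eta> > 0"
    and p01: "\<And>n. 0 \<le> p n \<and> p n \<le> 1"
    and dens: "\<And>S. S \<subseteq> {0..<k} \<Longrightarrow> induced_edges EH S \<noteq> {} \<Longrightarrow>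
        filterlim (\<lambda>n. real n ^ card S * p n ^ card (induced_edges EH S)) at_top sequentially"
    and Csub: "\<And>n. C n \<subseteq> {A. A \<subseteq> {1..n} \<and> card A = k}"
    and Ccard: "\<And>n. real (card (C n)) \<ge> \<eta> * real (n choose k)"
  shows "(\<lambda>n. measure_pmf.prob (Gnp n (p n)) {G. \<exists>A\<in>C n. copy_on n k EH G A})
           \<longlonglongrightarrow> 1"
proof -
  define Ss where "Ss = {S. S \<subseteq> {0..<k} \<and> induced_edges EH S \<noteq> {}}"
  define e where "e = (\<lambda>S. card (induced_edges EH S))"
  define m where "m = card EH"
  define P where "P = (\<lambda>n. measure_pmf.prob (Gnp n (p n)) {G. \<not>(\<exists>A\<in>C n. copy_on n k EH G A)})"
  define bnd where "bnd = (\<lambda>n. \<Sum>S\<in>Ss. (real k ^ k / \<eta>) * inverse (real n ^ card S * p n ^ e S))"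
  have finSs: "finite Ss" by (rule finite_subset[of _ "Pow {0..<k}"]) (auto simp: Ss_def)
  have finEH: "finite EH" by (rule finite_subset[of _ "Pow {0..<k}"]) (use H in \<open>auto simp: is_graph_def\<close>)
  have lim_bnd: "bnd \<longlonglongrightarrow> 0"
  proof -
    have "(\<lambda>n. \<Sum>S\<in>Ss. (real k ^ k / \<eta>) * inverse (real n ^ card S * p n ^ e S)) \<longlonglongrightarrow> (\<Sum>S\<in>Ss. (real k ^ k / \<eta>) * 0)"
    proof (rule tendsto_sum, rule tendsto_mult_left)
      fix S assume "S \<in> Ss"
      then have "filterlim (\<lambda>n. real n ^ card S * p n ^ e S) at_top sequentially"
        unfolding e_def Ss_def by (intro dens) auto
      then show "(\<lambda>n. inverse (real n ^ card S * p n ^ e S)) \<longlonglongrightarrow> 0"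
        by (rule tendsto_inverse_0_at_top)
    qed
    then show ?thesis by (simp add: bnd_def)
  qed
  have evpos: "\<forall>\<^sub>F n in sequentially. \<forall>S\<in>Ss. real n ^ card S * p n ^ e S > 0"
  proof (rule eventually_ball_finite[OF finSs], rule ballI)
    fix S assume "S \<in> Ss"
    then have "filterlim (\<lambda>n. real n ^ card S * p n ^ e S) at_top sequentially"
      unfolding e_def Ss_def by (intro dens) auto
    then show "\<forall>\<^sub>F n in sequentially. real n ^ card S * p n ^ e S > 0"
      by (simp add: filterlim_at_top_dense)
  qed
  have ev: "\<forall>\<^sub>F n in sequentially. k \<le> n \<and> 1 \<le> n \<and> (\<forall>S\<in>Ss. real n ^ card S * p n ^ e S > 0)"
    using evpos eventually_ge_at_top[of k] eventually_ge_at_top[of 1] by eventually_elim auto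
  have P_le: "\<forall>\<^sub>F n in sequentially. P n \<le> bnd n"
    using ev
  proof eventually_elim
    case (elim n)
    have kn: "k \<le> n" and n1: "1 \<le> n" using elim by simp_all
    define q where "q = p n"
    define c where "c = real (card (C n))"
    have q01: "0 \<le> q" "q \<le> 1" using p01 by (auto simp: q_def)
    have B: "P n * (c * q ^ m)^2 \<le> c * (\<Sum>S\<in>Ss. q ^ (2*m - e S) * real n ^ (k - card S))"
      using bound_n[OF H q01 Csub[of n]] unfolding P_def c_def q_def m_def e_def Ss_def .
    have bge: "(real n / real k) ^ k \<le> real (n choose k)"
      using binomial_ge_n_over_k_pow_k[OF kn] by simp
    have c_ge: "c \<ge> \<eta> * (real n / real k) ^ k"
      using mult_left_mono[OF bge, of \<eta>] eta Ccard[of n] unfolding c_def by linarith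
    have cpos: "c > 0"
    proof (cases "k = 0")
      case True then show ?thesis using c_ge eta by simp
    next
      case False
      then have xpos: "(real n / real k) ^ k > 0" using elim by simp
      show ?thesis using c_ge mult_pos_pos[OF eta xpos] by linarith
    qed
    show ?case
    proof (cases "Ss = {}")
      case True
      have "EH = {}"
      proof (rule ccontr)
        assume "EH \<noteq> {}"
        moreover have "induced_edges EH {0..<k} = EH" using H by (auto simp: induced_edges_def is_graph_def)
        ultimately have "{0..<k} \<in> Ss" by (simp add: Ss_def)
        then show False using True by simp
      qed
      then have "P n * c^2 \<le> 0" using B True by (simp add: m_def power_mult_distrib)
      moreover have "c^2 > 0" using cpos by simp
      ultimately have "P n \<le> 0" by (simp add: mult_le_0_iff)
      then show ?thesis using True by (simp add: bnd_def)
    next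
      case False
      then obtain S0 where S0: "S0 \<in> Ss" by blast
      then obtain f where f: "f \<in> EH" "f \<subseteq> S0" "S0 \<subseteq> {0..<k}" by (auto simp: Ss_def induced_edges_def)
      have "card f = 2" "f \<subseteq> {0..<k}" using H f by (auto simp: is_graph_def)
      then have k1: "k \<ge> 1" by (cases "k = 0") auto
      have fin_ind: "finite (induced_edges EH S)" for S using finEH by (simp add: induced_edges_def)
      have eS0: "e S0 > 0" using S0 fin_ind unfolding Ss_def e_def by (simp add: card_gt_0_iff)
      have posS0: "real n ^ card S0 * q ^ e S0 > 0" using elim S0 unfolding q_def by blast
      have "q \<noteq> 0"
      proof
        assume "q = 0"
        then have z: "q ^ e S0 = 0" using eS0 by (simp add: zero_power)
        show False using posS0 unfolding z by simp
      qed
      then have qpos: "q > 0" using q01 by simp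
      have Dpos: "(c * q ^ m)^2 > 0" using cpos qpos by simp
      have "P n \<le> c * (\<Sum>S\<in>Ss. q ^ (2*m - e S) * real n ^ (k - card S)) / (c * q ^ m)^2"
        using B Dpos by (simp add: pos_le_divide_eq)
      also have "\<dots> = (\<Sum>S\<in>Ss. q ^ (2*m - e S) * real n ^ (k - card S) / (c * q ^ (2*m)))"
        proof -
        have "(c * q ^ m)^2 = c * (c * q ^ (2*m))" by (simp add: power2_eq_square mult_2 power_add)
        then show ?thesis using cpos by (simp add: sum_divide_distrib)
      qed
      also have "\<dots> \<le> bnd n" unfolding bnd_def q_def[symmetric]
      proof (rule sum_mono)
        fix S assume S: "S \<in> Ss"
        have "card S \<le> card {0..<k}" using S unfolding Ss_def by (intro card_mono) auto
        then have cS: "card S \<le> k" by simp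
        have eS: "e S \<le> m" unfolding e_def m_def induced_edges_def by (rule card_mono[OF finEH]) auto
        show "q ^ (2*m - e S) * real n ^ (k - card S) / (c * q ^ (2*m))
            \<le> (real k ^ k / \<eta>) * inverse (real n ^ card S * q ^ e S)"
          by (rule term_bound[OF qpos n1 k1 cS eS eta c_ge])
      qed
      finally show ?thesis .
    qed
  qed
  have P_nn: "\<forall>\<^sub>F n in sequentially. 0 \<le> P n" by (simp add: P_def)
  have "P \<longlonglongrightarrow> 0"
    by (rule tendsto_sandwich[OF P_nn P_le tendsto_const lim_bnd])
  then have "(\<lambda>n. 1 - P n) \<longlonglongrightarrow> 1 - 0" by (intro tendsto_intros)
  moreover have eq1: "1 - P n = measure_pmf.prob (Gnp n (p n)) {G. \<exists>A\<in>C n. copy_on n k EH G A}" for n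
  proof -
    have eqs: "{G. \<exists>A\<in>C n. copy_on n k EH G A} = space (measure_pmf (Gnp n (p n))) - {G. \<not>(\<exists>A\<in>C n. copy_on n k EH G A)}"
      by auto
    have "measure_pmf.prob (Gnp n (p n)) (space (measure_pmf (Gnp n (p n))) - {G. \<not>(\<exists>A\<in>C n. copy_on n k EH G A)})
       = 1 - measure_pmf.prob (Gnp n (p n)) {G. \<not>(\<exists>A\<in>C n. copy_on n k EH G A)}"
      by (rule measure_pmf.prob_compl) simp
    then show ?thesis unfolding P_def eqs by (rule sym)
  qed
  moreover have "(\<lambda>n. 1 - P n) = (\<lambda>n. measure_pmf.prob (Gnp n (p n)) {G. \<exists>A\<in>C n. copy_on n k EH G A})"
    by (rule ext) (rule eq1)
  ultimately show ?thesis by simp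
qed

end
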